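(* Let $\mathcal{S}$ be a state space, $\mathcal{A}$ a finite action space, $\rho$ a distribution on $\mathcal{S}$, $\pi_{\mathrm{ref}}$ a policy with full support, $\beta>0$, $R>0$, and $r^*:\mathcal{S}\times\mathcal{A}\to[0,R]$. Let $$\Pi_{\le R/\beta}:=\Big\{\pi:\mathcal{S}\to\Delta(\mathcal{A})\ \Big|\ \max_{s,a}\Big|\log\frac{\pi(a|s)}{\pi_{\mathrm{ref}}(a|s)}\Big|\le\frac R\beta\Big\}.$$ Then for any policy $\pi\in\Pi_{\le R/\beta}$, $$\mathrm{Cov}^{\pi^*_{r^*}|\pi}\le1+\kappa\big(e^{2R/\beta}\big)\cdot\frac{J_\beta(\pi^*_{r^*})-J_\beta(\pi)}{\beta},$$ where $\kappa(x):=\frac{(x-1)^2}{x-1-\log x}$ (and $\kappa(x)=O(x)$).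
   Context: $\pi^*_{r^*}(a|s)\propto\pi_{\mathrm{ref}}(a|s)e^{r^*(s,a)/\beta}$; $J_\beta(\pi):=\mathbb{E}_{s\sim\rho}[\mathbb{E}_{a\sim\pi(\cdot|s)}r^*(s,a)-\beta\mathrm{KL}(\pi(\cdot|s)\|\pi_{\mathrm{ref}}(\cdot|s))]$; $\mathrm{Cov}^{\tilde\pi|\pi}:=\mathbb{E}_{s\sim\rho,a\sim\tilde\pi(\cdot|s)}[\tilde\pi(a|s)/\pi(a|s)]$. *)

theory Defs
  imports "HOL-Probability.Probability"
begin

text \<open>States: type 's with a probability measure rho; actions: a finite type 'a.
  A policy is a function pi :: 's => 'a => real, pi s a being pi(a|s).\<close>

definition is_policy :: "('s \<Rightarrow> 'a::finite \<Rightarrow> real) \<Rightarrow> bool" where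
  "is_policy p \<longleftrightarrow> (\<forall>s. (\<forall>a. p s a \<ge> 0) \<and> (\<Sum>a\<in>UNIV. p s a) = 1)"

definition pistar :: "real \<Rightarrow> ('s \<Rightarrow> 'a::finite \<Rightarrow> real) \<Rightarrow> ('s \<Rightarrow> 'a \<Rightarrow> real) \<Rightarrow> 's \<Rightarrow> 'a \<Rightarrow> real" where
  "pistar \<beta> piref r s a =
     piref s a * exp (r s a / \<beta>) / (\<Sum>b\<in>UNIV. piref s b * exp (r s b / \<beta>))"

definition KL :: "('s \<Rightarrow> 'a::finite \<Rightarrow> real) \<Rightarrow> ('s \<Rightarrow> 'a \<Rightarrow> real) \<Rightarrow> 's \<Rightarrow> real" where
  "KL p q s = (\<Sum>a\<in>UNIV. if p s a = 0 then 0 else p s a * ln (p s a / q s a))"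

definition J_beta :: "'s measure \<Rightarrow> ('s \<Rightarrow> 'a::finite \<Rightarrow> real) \<Rightarrow> real \<Rightarrow> ('s \<Rightarrow> 'a \<Rightarrow> real)
    \<Rightarrow> ('s \<Rightarrow> 'a \<Rightarrow> real) \<Rightarrow> real" where
  "J_beta \<rho> r \<beta> piref p =
     (\<integral>s. (\<Sum>a\<in>UNIV. p s a * r s a) - \<beta> * KL p piref s \<partial>\<rho>)"

definition Cov :: "'s measure \<Rightarrow> ('s \<Rightarrow> 'a::finite \<Rightarrow> real) \<Rightarrow> ('s \<Rightarrow> 'a \<Rightarrow> real) \<Rightarrow> real" where
  "Cov \<rho> pt p = (\<integral>s. (\<Sum>a\<in>UNIV. pt s a * (pt s a / p s a)) \<partial>\<rho>)"

definition kappa :: "real \<Rightarrow> real" where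
  "kappa x = (x - 1)^2 / (x - 1 - ln x)"

text \<open>The class Pi_{<= R/beta}: policies with |log (pi/pi_ref)| <= R/beta everywhere
  (the log being finite forces pi(a|s) > 0).\<close>
definition Pi_bounded :: "('s \<Rightarrow> 'a::finite \<Rightarrow> real) \<Rightarrow> real \<Rightarrow> ('s \<Rightarrow> 'a \<Rightarrow> real) set" where
  "Pi_bounded piref B = {p. is_policy p \<and> (\<forall>s a. p s a > 0 \<and> \<bar>ln (p s a / piref s a)\<bar> \<le> B)}"

end

theory Submission
  imports Defs
begin

lemma derG: "t > 0 \<Longrightarrow> ((\<lambda>t::real. (t - 1)^2 - 2 * (t - 1 - ln t)) has_real_derivative 2*(t-1) - 2*(1 - 1/t)) (at t)"
  apply (rule derivative_eq_intros refl | simp)+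
  done

lemma derF: "t > (0::real) \<Longrightarrow> ((\<lambda>t. A * (t - 1 - ln t) - B * (t - 1)^2) has_real_derivative (A * (1 - 1/t) - 2 * B * (t - 1))) (at t)"
  apply (rule derivative_eq_intros refl | simp)+
  done

lemma A_ge_2B:
  fixes x :: real assumes "1 \<le> x"
  shows "2 * (x - 1 - ln x) \<le> (x - 1)^2"
proof -
  let ?G = "\<lambda>t::real. (t - 1)^2 - 2 * (t - 1 - ln t)"
  have "?G 1 \<le> ?G x"
  proof (rule deriv_nonneg_imp_mono[where g = ?G and g' = "\<lambda>t. 2*(t-1) - 2*(1 - 1/t)"])
    fix t assume t: "t \<in> {1..x}"
    then have tp: "t > 0" by auto
    show "(?G has_real_derivative 2*(t-1) - 2*(1 - 1/t)) (at t)"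
      using derG[OF tp] .
    have "2*(t-1) - 2*(1 - 1/t) = 2*(t-1)^2/t" using tp by (simp add: field_simps power2_eq_square)
    then show "2*(t-1) - 2*(1 - 1/t) \<ge> 0" using tp by simp
  qed (use assms in auto)
  then show ?thesis by simp
qed

lemma key_ineq:
  fixes x w :: real
  assumes x: "1 < x" and w: "0 < w" "w \<le> x"
  shows "(w - 1)^2 \<le> kappa x * (w - 1 - ln w)"
proof -
  define A where "A = (x - 1)^2"
  define B where "B = x - 1 - ln x"
  have Bpos: "B > 0"
  proof -
    have "ln x < x - 1"
    proof -
      define q where "q = sqrt x"
      have q1: "q > 1" unfolding q_def using x by simp
      have xq: "x = q^2" unfolding q_def using x by simp
      have "ln x = 2 * ln q" unfolding xq using q1 by (simp add: ln_realpow)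
      also have "\<dots> \<le> 2 * (q - 1)" using ln_le_minus_one[of q] q1 by simp
      also have "\<dots> < q^2 - 1" proof - have "(q-1)^2 > 0" using q1 by simp then show ?thesis by (simp add: power2_eq_square algebra_simps) qed
      finally show ?thesis using xq by simp
    qed
    then show ?thesis unfolding B_def by simp
  qed
  have A2B: "2 * B \<le> A" unfolding A_def B_def using A_ge_2B x by simp
  have Apos: "A > 0" unfolding A_def using x by simp
  define F where "F = (\<lambda>t. A * (t - 1 - ln t) - B * (t - 1)^2)"
  define F' where "F' = (\<lambda>t::real. A * (1 - 1/t) - 2 * B * (t - 1))"
  have der: "(F has_real_derivative F' t) (at t)" if "t > 0" for t
    unfolding F_def F'_def using derF[OF that] .
  have F'eq: "F' t = (t - 1) * (A / t - 2 * B)" if "t > 0" for t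
    unfolding F'_def using that by (simp add: algebra_simps diff_divide_distrib)
  have F1: "F 1 = 0" unfolding F_def by simp
  have Fx: "F x = 0" unfolding F_def A_def B_def by (simp add: power2_eq_square algebra_simps)
  have "F w \<ge> 0"
  proof (cases "w \<le> 1")
    case True
    have "- F w \<le> - F 1"
    proof (rule deriv_nonneg_imp_mono[where g = "\<lambda>t. - F t" and g' = "\<lambda>t. - F' t"])
      fix t assume t: "t \<in> {w..1}"
      then have tp: "t > 0" using w by auto
      show "((\<lambda>t. - F t) has_real_derivative - F' t) (at t)"
        using DERIV_minus[OF der[OF tp]] .
      have "A / t \<ge> A" using t tp Apos by (simp add: le_divide_eq)
      then have "A / t - 2 * B \<ge> 0" using A2B by simp
      moreover have "t - 1 \<le> 0" using t by simp
      ultimately show "- F' t \<ge> 0" using F'eq[OF tp] by (simp add: mult_nonpos_nonneg)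
    qed (use True in auto)
    then show ?thesis using F1 by simp
  next
    case False
    define w0 where "w0 = A / (2 * B)"
    show ?thesis
    proof (cases "w \<le> w0")
      case True
      have "F 1 \<le> F w"
      proof (rule deriv_nonneg_imp_mono[where g = F and g' = F'])
        fix t assume t: "t \<in> {1..w}"
        then have tp: "t > 0" by auto
        show "(F has_real_derivative F' t) (at t)" using der[OF tp] .
        have "t \<le> w0" using t True by simp
        then have "A / t - 2 * B \<ge> 0" unfolding w0_def using tp Bpos by (simp add: le_divide_eq divide_le_eq mult.commute)
        moreover have "t - 1 \<ge> 0" using t by simp
        ultimately show "F' t \<ge> 0" using F'eq[OF tp] by simp
      qed (use False in auto)
      then show ?thesis using F1 by simp
    next
      case False2: False
      have "- F w \<le> - F x"
      proof (rule deriv_nonneg_imp_mono[where g = "\<lambda>t. - F t" and g' = "\<lambda>t. - F' t"])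
        fix t assume t: "t \<in> {w..x}"
        then have tp: "t > 0" using w by auto
        show "((\<lambda>t. - F t) has_real_derivative - F' t) (at t)"
          using DERIV_minus[OF der[OF tp]] .
        have "t \<ge> w0" using t False2 by simp
        then have "A / t - 2 * B \<le> 0" unfolding w0_def using tp Bpos by (simp add: le_divide_eq divide_le_eq mult.commute)
        moreover have "t - 1 \<ge> 0" using t False by simp
        ultimately show "- F' t \<ge> 0" using F'eq[OF tp] by (simp add: mult_nonneg_nonpos)
      qed (use w in auto)
      then show ?thesis using Fx by simp
    qed
  qed
  then have "B * (w - 1)^2 \<le> A * (w - 1 - ln w)" unfolding F_def by simp
  then have "(w - 1)^2 \<le> A * (w - 1 - ln w) / B" using Bpos by (simp add: le_divide_eq mult.commute)
  then show ?thesis unfolding kappa_def A_def B_def by (simp add: mult.commute times_divide_eq_left)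
qed
lemma ln_le_iff_le_exp: "0 < (x::real) \<Longrightarrow> ln x \<le> y \<longleftrightarrow> x \<le> exp y"
  by (metis exp_le_cancel_iff exp_ln)

lemma pointwise:
  fixes q P rr :: "'a::finite \<Rightarrow> real" and \<beta> R x :: real
  assumes qpos: "\<forall>a. q a > 0" and qsum: "(\<Sum>a\<in>UNIV. q a) = 1"
    and Ppos: "\<forall>a. P a > 0" and Psum: "(\<Sum>a\<in>UNIV. P a) = 1"
    and Pb: "\<forall>a. \<bar>ln (P a / q a)\<bar> \<le> R / \<beta>"
    and rb: "\<forall>a. 0 \<le> rr a \<and> rr a \<le> R" and bpos: "\<beta> > 0" and Rpos: "R > 0"
    and key: "\<And>w. 0 < w \<Longrightarrow> w \<le> exp (2 * R / \<beta>) \<Longrightarrow> (w - 1)^2 \<le> x * (w - 1 - ln w)"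
  defines "Z \<equiv> (\<Sum>b\<in>UNIV. q b * exp (rr b / \<beta>))"
  defines "S \<equiv> (\<lambda>a. q a * exp (rr a / \<beta>) / Z)"
  shows "(\<Sum>a\<in>UNIV. S a * (S a / P a)) \<le> 1 + x *
     ((((\<Sum>a\<in>UNIV. S a * rr a) - \<beta> * (\<Sum>a\<in>UNIV. if S a = 0 then 0 else S a * ln (S a / q a)))
      - ((\<Sum>a\<in>UNIV. P a * rr a) - \<beta> * (\<Sum>a\<in>UNIV. if P a = 0 then 0 else P a * ln (P a / q a)))) / \<beta>)"
    and "\<forall>a. S a > 0 \<and> S a / P a \<le> exp (2 * R / \<beta>) \<and> S a \<le> 1 \<and> \<bar>ln (S a / q a)\<bar> \<le> R / \<beta>"
proof -
  have Z1: "Z \<ge> 1"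
  proof -
    have "(\<Sum>b\<in>UNIV. q b) \<le> Z" unfolding Z_def
      using qpos rb bpos by (intro sum_mono) (simp add: less_imp_le)
    then show ?thesis using qsum by simp
  qed
  have ZR: "Z \<le> exp (R / \<beta>)"
  proof -
    have "Z \<le> (\<Sum>b\<in>UNIV. q b * exp (R / \<beta>))" unfolding Z_def
      using qpos rb bpos by (intro sum_mono mult_left_mono) (auto simp: divide_right_mono less_imp_le)
    also have "\<dots> = exp (R / \<beta>)" using qsum by (simp add: sum_distrib_right[symmetric])
    finally show ?thesis .
  qed
  have Zpos: "Z > 0" using Z1 by simp
  have Spos: "S a > 0" for a unfolding S_def using qpos Zpos by simp
  have Ssum: "(\<Sum>a\<in>UNIV. S a) = 1"
    unfolding S_def using Zpos by (simp add: sum_divide_distrib[symmetric] Z_def)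
  have lnSq: "ln (S a / q a) = rr a / \<beta> - ln Z" for a
  proof -
    have "S a / q a = exp (rr a / \<beta>) / Z" unfolding S_def using qpos[rule_format, of a] by (simp add: field_simps)
    then show ?thesis using Zpos by (simp add: ln_div)
  qed
  have lnZ: "0 \<le> ln Z" "ln Z \<le> R / \<beta>" using Z1 ZR Zpos by (auto simp: ln_le_iff_le_exp ln_ge_zero)
  have lnSqb: "\<bar>ln (S a / q a)\<bar> \<le> R / \<beta>" for a
  proof -
    have "0 \<le> rr a / \<beta>" "rr a / \<beta> \<le> R / \<beta>" using rb bpos by (auto simp: divide_right_mono)
    then show ?thesis unfolding lnSq using lnZ by linarith
  qed
  have Sle1: "S a \<le> 1" for a
    using member_le_sum[of a UNIV S] Spos Ssum by (simp add: less_imp_le)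
  have wpos: "S a / P a > 0" for a using Spos Ppos by simp
  have wb: "S a / P a \<le> exp (2 * R / \<beta>)" for a
  proof -
    have "ln (S a / P a) = ln (S a / q a) - ln (P a / q a)"
      using Spos[of a] Ppos[rule_format, of a] qpos[rule_format, of a] by (simp add: ln_div)
    also have "\<dots> \<le> 2 * R / \<beta>" using lnSqb[of a] Pb[rule_format, of a] by (simp add: abs_le_iff add_divide_distrib[symmetric])
    finally show ?thesis using wpos[of a] by (simp add: ln_le_iff_le_exp)
  qed
  show "\<forall>a. S a > 0 \<and> S a / P a \<le> exp (2 * R / \<beta>) \<and> S a \<le> 1 \<and> \<bar>ln (S a / q a)\<bar> \<le> R / \<beta>"
    using Spos wb Sle1 lnSqb by blast
  define L where "L = (\<Sum>a\<in>UNIV. P a * ln (S a / P a))"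
  have D: "(((\<Sum>a\<in>UNIV. S a * rr a) - \<beta> * (\<Sum>a\<in>UNIV. if S a = 0 then 0 else S a * ln (S a / q a)))
      - ((\<Sum>a\<in>UNIV. P a * rr a) - \<beta> * (\<Sum>a\<in>UNIV. if P a = 0 then 0 else P a * ln (P a / q a)))) / \<beta> = - L"
  proof -
    have e1: "(\<Sum>a\<in>UNIV. if S a = 0 then 0 else S a * ln (S a / q a)) = (\<Sum>a\<in>UNIV. S a * rr a) / \<beta> - ln Z"
    proof -
      have "(\<Sum>a\<in>UNIV. if S a = 0 then 0 else S a * ln (S a / q a)) = (\<Sum>a\<in>UNIV. S a * rr a / \<beta> - S a * ln Z)"
        using Spos by (intro sum.cong) (auto simp: lnSq less_imp_neq[symmetric] right_diff_distrib)
      also have "\<dots> = (\<Sum>a\<in>UNIV. S a * rr a) / \<beta> - ln Z"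
        by (simp add: sum_subtractf sum_divide_distrib[symmetric] sum_distrib_right[symmetric] Ssum)
      finally show ?thesis .
    qed
    have lnPq: "ln (P a / q a) = rr a / \<beta> - ln Z - ln (S a / P a)" for a
    proof -
      have "ln (P a / q a) = ln (S a / q a) - ln (S a / P a)"
        using Spos[of a] Ppos[rule_format, of a] qpos[rule_format, of a] by (simp add: ln_div)
      then show ?thesis using lnSq by simp
    qed
    have e2: "(\<Sum>a\<in>UNIV. if P a = 0 then 0 else P a * ln (P a / q a)) = (\<Sum>a\<in>UNIV. P a * rr a) / \<beta> - ln Z - L"
    proof -
      have "(\<Sum>a\<in>UNIV. if P a = 0 then 0 else P a * ln (P a / q a)) = (\<Sum>a\<in>UNIV. P a * rr a / \<beta> - P a * ln Z - P a * ln (S a / P a))"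
        using Ppos by (intro sum.cong) (auto simp: lnPq less_imp_neq[symmetric] right_diff_distrib)
      also have "\<dots> = (\<Sum>a\<in>UNIV. P a * rr a) / \<beta> - ln Z - L"
        by (simp add: L_def sum_subtractf sum_divide_distrib[symmetric] sum_distrib_right[symmetric] Psum)
      finally show ?thesis .
    qed
    show ?thesis unfolding e1 e2 using bpos by (simp add: field_simps)
  qed
  have per: "P a * (S a / P a - 1)^2 \<le> x * (P a * (S a / P a - 1 - ln (S a / P a)))" for a
  proof -
    have "P a * (S a / P a - 1)^2 \<le> P a * (x * (S a / P a - 1 - ln (S a / P a)))"
      by (rule mult_left_mono[OF key[OF wpos wb]]) (use Ppos in \<open>simp add: less_imp_le\<close>)
    then show ?thesis by (simp add: mult.left_commute)
  qed
  have lhs: "(\<Sum>a\<in>UNIV. P a * (S a / P a - 1)^2) = (\<Sum>a\<in>UNIV. S a * (S a / P a)) - 1"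
  proof -
    have "(\<Sum>a\<in>UNIV. P a * (S a / P a - 1)^2) = (\<Sum>a\<in>UNIV. S a * (S a / P a) - 2 * S a + P a)"
      using Ppos by (intro sum.cong) (auto simp: power2_eq_square field_simps less_imp_neq[symmetric])
    also have "\<dots> = (\<Sum>a\<in>UNIV. S a * (S a / P a)) - 1"
      by (simp add: sum.distrib sum_subtractf sum_distrib_left[symmetric] Ssum Psum)
    finally show ?thesis .
  qed
  have rhs: "(\<Sum>a\<in>UNIV. x * (P a * (S a / P a - 1 - ln (S a / P a)))) = x * (- L)"
  proof -
    have "(\<Sum>a\<in>UNIV. P a * (S a / P a - 1 - ln (S a / P a))) = (\<Sum>a\<in>UNIV. S a - P a - P a * ln (S a / P a))"
      using Ppos by (intro sum.cong) (auto simp: field_simps less_imp_neq[symmetric])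
    also have "\<dots> = - L" by (simp add: L_def sum_subtractf Ssum Psum)
    finally show ?thesis by (simp add: sum_distrib_left[symmetric])
  qed
  have "(\<Sum>a\<in>UNIV. P a * (S a / P a - 1)^2) \<le> (\<Sum>a\<in>UNIV. x * (P a * (S a / P a - 1 - ln (S a / P a))))"
    by (intro sum_mono per)
  then show "(\<Sum>a\<in>UNIV. S a * (S a / P a)) \<le> 1 + x *
     ((((\<Sum>a\<in>UNIV. S a * rr a) - \<beta> * (\<Sum>a\<in>UNIV. if S a = 0 then 0 else S a * ln (S a / q a)))
      - ((\<Sum>a\<in>UNIV. P a * rr a) - \<beta> * (\<Sum>a\<in>UNIV. if P a = 0 then 0 else P a * ln (P a / q a)))) / \<beta>)"
    unfolding lhs rhs D by simp
qed

lemma sum_abs_bound: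
  fixes g :: "'a::finite \<Rightarrow> real"
  assumes "\<And>a. \<bar>g a\<bar> \<le> B"
  shows "\<bar>\<Sum>a\<in>UNIV. g a\<bar> \<le> real CARD('a) * B"
proof -
  have "\<bar>\<Sum>a\<in>UNIV. g a\<bar> \<le> (\<Sum>a\<in>UNIV. \<bar>g a\<bar>)" by (rule sum_abs)
  also have "\<dots> \<le> of_nat (card (UNIV :: 'a set)) * B" by (rule sum_bounded_above) (use assms in auto)
  finally show ?thesis by simp
qed

theorem lemmaE4:
  fixes \<rho> :: "'s measure" and piref p r :: "'s \<Rightarrow> 'a::finite \<Rightarrow> real"
    and \<beta> R :: real
  assumes "prob_space \<rho>"
    and "is_policy piref" and "\<forall>s a. piref s a > 0"
    and "\<beta> > 0" and "R > 0"
    and "\<forall>s a. 0 \<le> r s a \<and> r s a \<le> R"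
    and "\<forall>a. (\<lambda>s. r s a) \<in> borel_measurable \<rho>"
    and "\<forall>a. (\<lambda>s. piref s a) \<in> borel_measurable \<rho>"
    and "\<forall>a. (\<lambda>s. p s a) \<in> borel_measurable \<rho>"
    and "p \<in> Pi_bounded piref (R / \<beta>)"
  shows "Cov \<rho> (pistar \<beta> piref r) p
           \<le> 1 + kappa (exp (2 * R / \<beta>)) *
                 ((J_beta \<rho> r \<beta> piref (pistar \<beta> piref r) - J_beta \<rho> r \<beta> piref p) / \<beta>)"
proof -
  interpret prob_space \<rho> by fact
  note bpos = \<open>\<beta> > 0\<close> and Rpos = \<open>R > 0\<close>
  have mr[measurable]: "(\<lambda>s. r s a) \<in> borel_measurable \<rho>" for a using assms(7) by blast
  have mq[measurable]: "(\<lambda>s. piref s a) \<in> borel_measurable \<rho>" for a using assms(8) by blast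
  have mp[measurable]: "(\<lambda>s. p s a) \<in> borel_measurable \<rho>" for a using assms(9) by blast
  have pol: "is_policy p" and ppos: "\<forall>s a. p s a > 0" and pb: "\<forall>s a. \<bar>ln (p s a / piref s a)\<bar> \<le> R / \<beta>"
    using assms(10) unfolding Pi_bounded_def by auto
  have psum: "(\<Sum>a\<in>UNIV. p s a) = 1" for s using pol unfolding is_policy_def by blast
  have qsum: "(\<Sum>a\<in>UNIV. piref s a) = 1" for s using assms(2) unfolding is_policy_def by blast
  have ple1: "p s a \<le> 1" for s a
    using member_le_sum[of a UNIV "p s"] ppos psum[of s] by (simp add: less_imp_le)
  define x where "x = exp (2 * R / \<beta>)"
  have x1: "1 < x" unfolding x_def using bpos Rpos by simp
  have keyx: "\<And>w. 0 < w \<Longrightarrow> w \<le> exp (2 * R / \<beta>) \<Longrightarrow> (w - 1)^2 \<le> kappa x * (w - 1 - ln w)"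
    using key_ineq[OF x1] unfolding x_def by blast
  define S where "S = pistar \<beta> piref r"
  have Seq: "S s = (\<lambda>a. piref s a * exp (r s a / \<beta>) / (\<Sum>b\<in>UNIV. piref s b * exp (r s b / \<beta>)))" for s
    unfolding S_def by (simp add: pistar_def fun_eq_iff)
  have mS[measurable]: "(\<lambda>s. S s a) \<in> borel_measurable \<rho>" for a
    unfolding S_def pistar_def by measurable
  define fc where "fc = (\<lambda>s. (\<Sum>a\<in>UNIV. S s a * (S s a / p s a)))"
  define f1 where "f1 = (\<lambda>s. (\<Sum>a\<in>UNIV. S s a * r s a) - \<beta> * KL S piref s)"
  define f2 where "f2 = (\<lambda>s. (\<Sum>a\<in>UNIV. p s a * r s a) - \<beta> * KL p piref s)"
  have pwboth: "fc s \<le> 1 + kappa x * ((f1 s - f2 s) / \<beta>) \<and>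
      (\<forall>a. S s a > 0 \<and> S s a / p s a \<le> exp (2 * R / \<beta>) \<and> S s a \<le> 1 \<and> \<bar>ln (S s a / piref s a)\<bar> \<le> R / \<beta>)" for s
  proof -
    have h1: "\<forall>a. piref s a > 0" using assms(3) by blast
    have h2: "\<forall>a. p s a > 0" using ppos by blast
    have h3: "\<forall>a. \<bar>ln (p s a / piref s a)\<bar> \<le> R / \<beta>" using pb by blast
    have h4: "\<forall>a. 0 \<le> r s a \<and> r s a \<le> R" using assms(6) by blast
    note RR = pointwise[of "piref s" "p s" R \<beta> "r s" "kappa x", OF h1 qsum h2 psum h3 h4 bpos Rpos keyx]
    show ?thesis unfolding fc_def f1_def f2_def KL_def Seq using RR by blast
  qed
  have pw: "fc s \<le> 1 + kappa x * ((f1 s - f2 s) / \<beta>)" for s using pwboth by blast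
  have pw2: "\<forall>a. S s a > 0 \<and> S s a / p s a \<le> exp (2 * R / \<beta>) \<and> S s a \<le> 1 \<and> \<bar>ln (S s a / piref s a)\<bar> \<le> R / \<beta>" for s
    using pwboth by blast
  have mfc: "fc \<in> borel_measurable \<rho>" unfolding fc_def by measurable
  have mf1: "f1 \<in> borel_measurable \<rho>" unfolding f1_def KL_def by measurable
  have mf2: "f2 \<in> borel_measurable \<rho>" unfolding f2_def KL_def by measurable
  have ifc: "integrable \<rho> fc"
  proof (rule integrable_const_bound[where B = "real CARD('a) * x"])
    show "AE s in \<rho>. norm (fc s) \<le> real CARD('a) * x"
    proof (intro AE_I2)
      fix s
      have "\<bar>S s a * (S s a / p s a)\<bar> \<le> x" for a
      proof -
        have "S s a * (S s a / p s a) \<le> 1 * x" using pw2[of s] ppos unfolding x_def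
          by (intro mult_mono) (auto simp: less_imp_le)
        moreover have "S s a * (S s a / p s a) \<ge> 0" using pw2[of s] ppos by (auto simp: less_imp_le)
        ultimately show ?thesis by simp
      qed
      then show "norm (fc s) \<le> real CARD('a) * x" unfolding fc_def real_norm_def by (rule sum_abs_bound)
    qed
  qed (rule mfc)
  have i1: "integrable \<rho> f1"
  proof (rule integrable_const_bound[where B = "real CARD('a) * R + \<beta> * (real CARD('a) * (R / \<beta>))"])
    show "AE s in \<rho>. norm (f1 s) \<le> real CARD('a) * R + \<beta> * (real CARD('a) * (R / \<beta>))"
    proof (intro AE_I2)
      fix s
      have b1: "\<bar>S s a * r s a\<bar> \<le> R" for a
      proof -
        have "S s a * r s a \<le> 1 * R" using pw2[of s] assms(6) by (intro mult_mono) (auto simp: less_imp_le)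
        moreover have "S s a * r s a \<ge> 0" using pw2[of s] assms(6) by (auto simp: less_imp_le)
        ultimately show ?thesis by simp
      qed
      have b2: "\<bar>if S s a = 0 then 0 else S s a * ln (S s a / piref s a)\<bar> \<le> R / \<beta>" for a
      proof -
        have "\<bar>S s a * ln (S s a / piref s a)\<bar> = S s a * \<bar>ln (S s a / piref s a)\<bar>"
          using pw2[of s] by (simp add: abs_mult less_imp_le)
        also have "\<dots> \<le> 1 * (R / \<beta>)" using pw2[of s] by (intro mult_mono) (auto simp: less_imp_le)
        finally show ?thesis using Rpos bpos by auto
      qed
      have "\<bar>f1 s\<bar> \<le> \<bar>\<Sum>a\<in>UNIV. S s a * r s a\<bar> + \<beta> * \<bar>KL S piref s\<bar>"
        unfolding f1_def using abs_triangle_ineq4[of "\<Sum>a\<in>UNIV. S s a * r s a" "\<beta> * KL S piref s"] bpos by (simp add: abs_mult)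
      also have "\<dots> \<le> real CARD('a) * R + \<beta> * (real CARD('a) * (R / \<beta>))"
        unfolding KL_def using bpos
        by (intro add_mono mult_left_mono sum_abs_bound b1 b2) auto
      finally show "norm (f1 s) \<le> real CARD('a) * R + \<beta> * (real CARD('a) * (R / \<beta>))" by simp
    qed
  qed (rule mf1)
  have i2: "integrable \<rho> f2"
  proof (rule integrable_const_bound[where B = "real CARD('a) * R + \<beta> * (real CARD('a) * (R / \<beta>))"])
    show "AE s in \<rho>. norm (f2 s) \<le> real CARD('a) * R + \<beta> * (real CARD('a) * (R / \<beta>))"
    proof (intro AE_I2)
      fix s
      have b1: "\<bar>p s a * r s a\<bar> \<le> R" for a
      proof -
        have "p s a * r s a \<le> 1 * R" using ple1[of s a] ppos assms(6) by (intro mult_mono) (auto simp: less_imp_le)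
        moreover have "p s a * r s a \<ge> 0" using ppos assms(6) by (auto simp: less_imp_le)
        ultimately show ?thesis by simp
      qed
      have b2: "\<bar>if p s a = 0 then 0 else p s a * ln (p s a / piref s a)\<bar> \<le> R / \<beta>" for a
      proof -
        have "\<bar>p s a * ln (p s a / piref s a)\<bar> = p s a * \<bar>ln (p s a / piref s a)\<bar>"
          using ppos by (simp add: abs_mult less_imp_le)
        also have "\<dots> \<le> 1 * (R / \<beta>)" using ple1[of s a] ppos pb by (intro mult_mono) (auto simp: less_imp_le)
        finally show ?thesis using Rpos bpos by auto
      qed
      have "\<bar>f2 s\<bar> \<le> \<bar>\<Sum>a\<in>UNIV. p s a * r s a\<bar> + \<beta> * \<bar>KL p piref s\<bar>"
        unfolding f2_def using abs_triangle_ineq4[of "\<Sum>a\<in>UNIV. p s a * r s a" "\<beta> * KL p piref s"] bpos by (simp add: abs_mult)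
      also have "\<dots> \<le> real CARD('a) * R + \<beta> * (real CARD('a) * (R / \<beta>))"
        unfolding KL_def using bpos
        by (intro add_mono mult_left_mono sum_abs_bound b1 b2) auto
      finally show "norm (f2 s) \<le> real CARD('a) * R + \<beta> * (real CARD('a) * (R / \<beta>))" by simp
    qed
  qed (rule mf2)
  have igr: "integrable \<rho> (\<lambda>s. kappa x * ((f1 s - f2 s) / \<beta>))"
    using Bochner_Integration.integrable_diff[OF i1 i2] by (intro integrable_mult_right integrable_divide)
  have "Cov \<rho> S p = integral\<^sup>L \<rho> fc" unfolding Cov_def fc_def by simp
  also have "\<dots> \<le> (\<integral>s. 1 + kappa x * ((f1 s - f2 s) / \<beta>) \<partial>\<rho>)"
    by (rule integral_mono[OF ifc]) (use igr pw in auto)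
  also have "\<dots> = (\<integral>s. 1 \<partial>\<rho>) + (\<integral>s. kappa x * ((f1 s - f2 s) / \<beta>) \<partial>\<rho>)"
    by (rule Bochner_Integration.integral_add) (use igr in auto)
  also have "\<dots> = 1 + kappa x * ((integral\<^sup>L \<rho> f1 - integral\<^sup>L \<rho> f2) / \<beta>)"
    using i1 i2 Bochner_Integration.integrable_diff[OF i1 i2] by (simp add: prob_space)
  also have "\<dots> = 1 + kappa x * ((J_beta \<rho> r \<beta> piref S - J_beta \<rho> r \<beta> piref p) / \<beta>)"
    unfolding J_beta_def f1_def f2_def by simp
  finally show ?thesis unfolding S_def x_def .
qed

end
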